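(* Let $G$ be a finite group and $T$ a $G$-transfer system with exactly one connected component. Then $T$ is lesser simply paired; in fact the only $G$-transfer system $T'$ with $(T,T')$ compatible is $T'=T_c=\mathrm{Hull}(T)$.
   Context: A $G$-transfer system is a partial order $\to$ on the set of subgroups of $G$ such that: $K\to H$ implies $K\le H$; $H\to H$ for all $H$; $L\to K$ and $K\to H$ imply $L\to H$; $K\to H$ implies $K\cap L\to H\cap L$ for every $L\le G$; $K\to H$ implies $gKg^{-1}\to gHg^{-1}$ for all $g\in G$. Connected components are those of the underlying undirected graph on subgroups with edges $K\to H$. A transfer system is saturated if whenever $L\le K\le H$ and $L\to H$ is in it, then $K\to H$ is in it; $\mathrm{Hull}(T)$ is the smallest saturated $G$-transfer system containing $T$; $T_c$ is the complete transfer system containing $K\to H$ for all $K\le H$. A pair $(T,T')$ is compatible if (1) $T\subseteq T'$, and (2) for all subgroups $A,B,C$ with $B,C\le A$: if $B\to A$ is in $T$ and $B\cap C\to B$ is in $T'$, then $C\to A$ is in $T'$. $T$ is lesser simply paired if for every $G$-transfer system $T'\supseteq T$, $(T,T')$ is compatible if and only if $T'\in\{\mathrm{Hull}(T),T_c\}$. *)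

theory Defs
  imports "HOL-Algebra.Algebra"
begin

definition conjugate :: "('a, 'b) monoid_scheme \<Rightarrow> 'a \<Rightarrow> 'a set \<Rightarrow> 'a set" where
  "conjugate G g H = (\<lambda>h. g \<otimes>\<^bsub>G\<^esub> h \<otimes>\<^bsub>G\<^esub> inv\<^bsub>G\<^esub> g) ` H"

definition transfer_system ::
  "('a, 'b) monoid_scheme \<Rightarrow> ('a set \<Rightarrow> 'a set \<Rightarrow> bool) \<Rightarrow> bool" where
  "transfer_system G T \<longleftrightarrow>
     (\<forall>K H. T K H \<longrightarrow> subgroup K G \<and> subgroup H G \<and> K \<subseteq> H) \<and>
     (\<forall>H. subgroup H G \<longrightarrow> T H H) \<and>
     (\<forall>L K H. T L K \<longrightarrow> T K H \<longrightarrow> T L H) \<and>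
     (\<forall>K H L. T K H \<longrightarrow> subgroup L G \<longrightarrow> T (K \<inter> L) (H \<inter> L)) \<and>
     (\<forall>K H g. T K H \<longrightarrow> g \<in> carrier G \<longrightarrow> T (conjugate G g K) (conjugate G g H))"

text \<open>T has exactly one connected component: any two subgroups are joined by a path in the
underlying undirected graph (there is always at least one subgroup).\<close>
definition one_component ::
  "('a, 'b) monoid_scheme \<Rightarrow> ('a set \<Rightarrow> 'a set \<Rightarrow> bool) \<Rightarrow> bool" where
  "one_component G T \<longleftrightarrow>
     (\<forall>K H. subgroup K G \<longrightarrow> subgroup H G \<longrightarrow> (\<lambda>x y. T x y \<or> T y x)\<^sup>*\<^sup>* K H)"

definition saturated ::
  "('a, 'b) monoid_scheme \<Rightarrow> ('a set \<Rightarrow> 'a set \<Rightarrow> bool) \<Rightarrow> bool" where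
  "saturated G T \<longleftrightarrow>
     (\<forall>L K H. subgroup L G \<longrightarrow> subgroup K G \<longrightarrow> subgroup H G \<longrightarrow>
        L \<subseteq> K \<longrightarrow> K \<subseteq> H \<longrightarrow> T L H \<longrightarrow> T K H)"

definition Hull ::
  "('a, 'b) monoid_scheme \<Rightarrow> ('a set \<Rightarrow> 'a set \<Rightarrow> bool) \<Rightarrow> ('a set \<Rightarrow> 'a set \<Rightarrow> bool)" where
  "Hull G T = (\<lambda>K H. \<forall>T'. transfer_system G T' \<and> saturated G T' \<and> T \<le> T' \<longrightarrow> T' K H)"

definition T_c :: "('a, 'b) monoid_scheme \<Rightarrow> ('a set \<Rightarrow> 'a set \<Rightarrow> bool)" where
  "T_c G = (\<lambda>K H. subgroup K G \<and> subgroup H G \<and> K \<subseteq> H)"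

definition compatible ::
  "('a, 'b) monoid_scheme \<Rightarrow> ('a set \<Rightarrow> 'a set \<Rightarrow> bool) \<Rightarrow> ('a set \<Rightarrow> 'a set \<Rightarrow> bool) \<Rightarrow> bool" where
  "compatible G T T' \<longleftrightarrow> T \<le> T' \<and>
     (\<forall>A B C. subgroup A G \<longrightarrow> subgroup B G \<longrightarrow> subgroup C G \<longrightarrow> B \<subseteq> A \<longrightarrow> C \<subseteq> A \<longrightarrow>
        T B A \<longrightarrow> T' (B \<inter> C) B \<longrightarrow> T' C A)"

definition lesser_simply_paired ::
  "('a, 'b) monoid_scheme \<Rightarrow> ('a set \<Rightarrow> 'a set \<Rightarrow> bool) \<Rightarrow> bool" where
  "lesser_simply_paired G T \<longleftrightarrow>
     (\<forall>T'. transfer_system G T' \<longrightarrow> T \<le> T' \<longrightarrow>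
        (compatible G T T' \<longleftrightarrow> T' = Hull G T \<or> T' = T_c G))"

end

theory Submission
  imports Defs
begin

lemma conj_eq:
  assumes "group G" "g \<in> carrier G" "H \<subseteq> carrier G"
  shows "conjugate G g H = g <#\<^bsub>G\<^esub> H #>\<^bsub>G\<^esub> inv\<^bsub>G\<^esub> g"
  unfolding conjugate_def l_coset_def r_coset_def by auto

lemma Tc_ts:
  assumes "group G"
  shows "transfer_system G (T_c G)"
proof -
  interpret group G by fact
  have 4: "\<forall>K H L. T_c G K H \<longrightarrow> subgroup L G \<longrightarrow> T_c G (K \<inter> L) (H \<inter> L)"
    unfolding T_c_def using subgroups_Inter_pair by auto
  have 5: "\<forall>K H g. T_c G K H \<longrightarrow> g \<in> carrier G \<longrightarrow> T_c G (conjugate G g K) (conjugate G g H)"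
  proof (intro allI impI)
    fix K H g assume a: "T_c G K H" "g \<in> carrier G"
    then have s: "subgroup K G" "subgroup H G" "K \<subseteq> H" unfolding T_c_def by auto
    have "subgroup (conjugate G g K) G"
      using conj_eq[OF assms a(2) subgroup.subset[OF s(1)]] subgroup_conjugation_is_surj2[OF a(2) s(1)] by simp
    moreover have "subgroup (conjugate G g H) G"
      using conj_eq[OF assms a(2) subgroup.subset[OF s(2)]] subgroup_conjugation_is_surj2[OF a(2) s(2)] by simp
    moreover have "conjugate G g K \<subseteq> conjugate G g H" using s(3) unfolding conjugate_def by auto
    ultimately show "T_c G (conjugate G g K) (conjugate G g H)" unfolding T_c_def by simp
  qed
  show ?thesis unfolding transfer_system_def using 4 5 by (auto simp: T_c_def)
qed

lemma Tc_sat: "saturated G (T_c G)"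
  unfolding saturated_def T_c_def by auto

theorem mainTheorem8:
  fixes G :: "('a, 'b) monoid_scheme" and T :: "'a set \<Rightarrow> 'a set \<Rightarrow> bool"
  assumes "group G" and "finite (carrier G)"
    and "transfer_system G T" and "one_component G T"
  shows "lesser_simply_paired G T \<and> Hull G T = T_c G \<and>
    (\<forall>T'. transfer_system G T' \<longrightarrow> (compatible G T T' \<longleftrightarrow> T' = T_c G))"
proof -
  interpret group G by fact
  define e where "e = {\<one>\<^bsub>G\<^esub>}"
  have es: "subgroup e G" unfolding e_def by (rule triv_subgroup)
  have eK: "e \<subseteq> K" if "subgroup K G" for K
    unfolding e_def using subgroup.one_closed[OF that] by simp
  note TS = assms(3)[unfolded transfer_system_def]
  note ts1 = TS[THEN conjunct1, rule_format]
  note ts2 = TS[THEN conjunct2, THEN conjunct1, rule_format]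
  note ts3 = TS[THEN conjunct2, THEN conjunct2, THEN conjunct1, rule_format]
  note ts4 = TS[THEN conjunct2, THEN conjunct2, THEN conjunct2, THEN conjunct1, rule_format]
  have TTc: "T \<le> T_c G" unfolding T_c_def le_fun_def le_bool_def using ts1 by blast
  have one: "T e H" if "subgroup H G" for H
  proof -
    have "(\<lambda>x y. T x y \<or> T y x)\<^sup>*\<^sup>* e H"
      using assms(4)[unfolded one_component_def, rule_format, OF es that] .
    then show ?thesis
    proof induction
      case base then show ?case using ts2[OF es] .
    next
      case (step K H)
      show ?case
      proof (cases "T K H")
        case True then show ?thesis using ts3[OF step(3)] by blast
      next
        case False
        then have h: "T H K" using step(2) by simp
        have hs0: "subgroup H G \<and> subgroup K G \<and> H \<subseteq> K" by (rule ts1[OF h])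
        then have hs: "subgroup H G" "H \<subseteq> K" by auto
        have "T (e \<inter> H) (K \<inter> H)" using ts4[OF step(3) hs(1)] .
        moreover have "e \<inter> H = e" "K \<inter> H = H"
          using eK[OF hs(1)] hs(2) by auto
        ultimately show ?thesis by simp
      qed
    qed
  qed
  have hull: "Hull G T = T_c G"
  proof (intro ext iffI)
    fix K H assume h: "Hull G T K H"
    have "transfer_system G (T_c G) \<and> saturated G (T_c G) \<and> T \<le> T_c G"
      using Tc_ts[OF assms(1)] Tc_sat TTc by blast
    then show "T_c G K H" using h unfolding Hull_def by blast
  next
    fix K H assume k: "T_c G K H"
    then have k1: "subgroup K G" "subgroup H G" "K \<subseteq> H" unfolding T_c_def by auto
    show "Hull G T K H" unfolding Hull_def
    proof (intro allI impI)
      fix T' assume t': "transfer_system G T' \<and> saturated G T' \<and> T \<le> T'"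
      have "T' e H" using one[OF k1(2)] t' by (auto simp: le_fun_def)
      moreover have "saturated G T'" using t' by blast
      ultimately show "T' K H" using es k1 eK[OF k1(1)] unfolding saturated_def by blast
    qed
  qed
  have main: "compatible G T T' \<longleftrightarrow> T' = T_c G" if t': "transfer_system G T'" for T'
  proof
    assume c: "compatible G T T'"
    show "T' = T_c G"
    proof (intro ext iffI)
      fix K H assume "T' K H"
      then have "subgroup K G \<and> subgroup H G \<and> K \<subseteq> H"
        by (rule t'[unfolded transfer_system_def, THEN conjunct1, rule_format])
      then show "T_c G K H" unfolding T_c_def .
    next
      fix K H assume k: "T_c G K H"
      then have k1: "subgroup K G" "subgroup H G" "K \<subseteq> H" unfolding T_c_def by auto
      have a: "T e H" using one[OF k1(2)] .
      have b: "T' (e \<inter> K) e"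
      proof -
        have "e \<inter> K = e" using eK[OF k1(1)] by blast
        moreover have "T' e e"
          by (rule t'[unfolded transfer_system_def, THEN conjunct2, THEN conjunct1, rule_format, OF es])
        ultimately show ?thesis by simp
      qed
      have c2: "\<And>A B C. subgroup A G \<Longrightarrow> subgroup B G \<Longrightarrow> subgroup C G \<Longrightarrow> B \<subseteq> A \<Longrightarrow> C \<subseteq> A \<Longrightarrow>
        T B A \<Longrightarrow> T' (B \<inter> C) B \<Longrightarrow> T' C A" using c unfolding compatible_def by blast
      show "T' K H" by (rule c2[OF k1(2) es k1(1) eK[OF k1(2)] k1(3) a b])
    qed
  next
    assume "T' = T_c G"
    then show "compatible G T T'" using TTc unfolding compatible_def by (simp add: T_c_def)
  qed
  have lsp: "lesser_simply_paired G T"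
    unfolding lesser_simply_paired_def using main hull by blast
  show ?thesis using lsp hull main by blast
qed

end
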